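(* Let $C\subset\mathbb P^n_K$ be a projective curve (closed subscheme of dimension $1$) over an algebraically closed field $K$ whose $h$-vector is positive. Then the arithmetic genus $g$ of $C$ is non-negative.
   Context: Let $S=K[x_0,\dots,x_n]$ and $I$ the saturated ideal of $C$. The Hilbert series $\sum_t\dim_K(S/I)_tz^t$ equals $h(z)/(1-z)^2$ with $h(z)=h_0+\dots+h_sz^s$, $h_s\ne0$; $(h_0,\dots,h_s)$ is the $h$-vector, positive if $h_i>0$ for all $i$. The Hilbert polynomial of $C$ is $P_C(t)=\deg(C)\,t+1-g$, which defines the arithmetic genus $g$. *)

theory Defs
  imports "HOL-Library.Poly_Mapping" "HOL-Computational_Algebra.Computational_Algebra"
begin

text \<open>Polynomial ring S = K[x_v | v in 'v] (the variables indexed by a finite type 'v,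
  so n + 1 = CARD('v)): polynomials are finitely supported maps from monomials
  (exponent vectors 'v =>0 nat) to coefficients.\<close>

type_synonym ('v, 'a) mpoly = "('v \<Rightarrow>\<^sub>0 nat) \<Rightarrow>\<^sub>0 'a"

definition mdeg :: "('v \<Rightarrow>\<^sub>0 nat) \<Rightarrow> nat" where
  "mdeg \<mu> = (\<Sum>v\<in>Poly_Mapping.keys \<mu>. Poly_Mapping.lookup \<mu> v)"

definition kscale :: "'a::comm_ring_1 \<Rightarrow> ('v, 'a) mpoly \<Rightarrow> ('v, 'a) mpoly" where
  "kscale c p = Poly_Mapping.single 0 c * p"

definition hom_piece :: "nat \<Rightarrow> ('v, 'a::comm_ring_1) mpoly set" where
  "hom_piece t = {p. \<forall>\<mu>\<in>Poly_Mapping.keys p. mdeg \<mu> = t}"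

definition hom_comp :: "nat \<Rightarrow> ('v, 'a::comm_ring_1) mpoly \<Rightarrow> ('v, 'a) mpoly" where
  "hom_comp t p = (\<Sum>\<mu>\<in>{\<mu>\<in>Poly_Mapping.keys p. mdeg \<mu> = t}. Poly_Mapping.single \<mu> (Poly_Mapping.lookup p \<mu>))"

definition is_ideal :: "('v, 'a::comm_ring_1) mpoly set \<Rightarrow> bool" where
  "is_ideal I \<longleftrightarrow> 0 \<in> I \<and> (\<forall>p\<in>I. \<forall>q\<in>I. p + q \<in> I) \<and> (\<forall>p\<in>I. \<forall>q. q * p \<in> I)"

definition is_hom_ideal :: "('v, 'a::comm_ring_1) mpoly set \<Rightarrow> bool" where
  "is_hom_ideal I \<longleftrightarrow> is_ideal I \<and> (\<forall>p\<in>I. \<forall>t. hom_comp t p \<in> I)"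

text \<open>Saturation with respect to the irrelevant ideal m = (x_0,...,x_n):
  I : m^\<infinity> = {f. \<exists>k. m^k f \<subseteq> I}; m^k is generated by the monomials of degree k.\<close>
definition saturation :: "('v, 'a::comm_ring_1) mpoly set \<Rightarrow> ('v, 'a) mpoly set" where
  "saturation I = {f. \<exists>k. \<forall>\<mu>. mdeg \<mu> = k \<longrightarrow> Poly_Mapping.single \<mu> 1 * f \<in> I}"

definition saturated :: "('v, 'a::comm_ring_1) mpoly set \<Rightarrow> bool" where
  "saturated I \<longleftrightarrow> saturation I = I"

text \<open>Hilbert function t \<mapsto> dim_K (S/I)_t = dim_K S_t - dim_K I_t.\<close>
definition hilb :: "('v, 'a::field) mpoly set \<Rightarrow> nat \<Rightarrow> nat" where
  "hilb I t = vector_space.dim kscale (hom_piece t :: ('v, 'a) mpoly set)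
              - vector_space.dim kscale (I \<inter> hom_piece t)"

definition hilb_series :: "('v, 'a::field) mpoly set \<Rightarrow> int fps" where
  "hilb_series I = Abs_fps (\<lambda>t. int (hilb I t))"

end

theory Submission
  imports Defs
begin

lemma vs_kscale: "vector_space (kscale :: 'a::field \<Rightarrow> ('v, 'a) mpoly \<Rightarrow> _)"
  by unfold_locales
     (simp_all add: kscale_def distrib_left distrib_right single_add mult_single flip: mult.assoc)

lemma mdeg_zero: "mdeg \<mu> = 0 \<Longrightarrow> \<mu> = 0"
proof -
  assume "mdeg \<mu> = 0"
  hence "\<forall>v\<in>Poly_Mapping.keys \<mu>. Poly_Mapping.lookup \<mu> v = 0"
    unfolding mdeg_def by (simp add: sum_eq_0_iff)
  hence "\<forall>v. Poly_Mapping.lookup \<mu> v = 0" by (auto simp: in_keys_iff)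
  thus "\<mu> = 0" by (intro poly_mapping_eqI) simp
qed

lemma hom_piece0_dim:
  "vector_space.dim kscale (hom_piece 0 :: ('v, 'a::field) mpoly set) \<le> 1"
proof -
  interpret vector_space "kscale :: 'a \<Rightarrow> ('v, 'a) mpoly \<Rightarrow> _" by (rule vs_kscale)
  have "hom_piece 0 \<subseteq> span {1 :: ('v, 'a) mpoly}"
  proof
    fix p :: "('v,'a) mpoly" assume "p \<in> hom_piece 0"
    hence k: "\<And>\<mu>. \<mu> \<in> Poly_Mapping.keys p \<Longrightarrow> \<mu> = 0"
      unfolding hom_piece_def using mdeg_zero by blast
    have "p = Poly_Mapping.single 0 (Poly_Mapping.lookup p 0)"
    proof (rule poly_mapping_eqI)
      fix k show "Poly_Mapping.lookup p k = Poly_Mapping.lookup (Poly_Mapping.single 0 (Poly_Mapping.lookup p 0)) k"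
        using k[of k] by (cases "k = 0") (auto simp: lookup_single_not_eq in_keys_iff)
    qed
    also have "\<dots> = kscale (Poly_Mapping.lookup p 0) 1" by (simp add: kscale_def)
    also have "\<dots> \<in> span {1}" by (intro span_scale span_base) simp
    finally show "p \<in> span {1}" .
  qed
  from dim_le_card[OF this] show ?thesis by simp
qed

theorem proposition1p4:
  fixes I :: "('v::finite, 'a::alg_closed_field) mpoly set"
    and h :: "int poly" and d g :: int
  assumes hom: "is_hom_ideal I"
    and sat: "saturated I"
    and hilb_poly: "\<forall>\<^sub>F t in sequentially. int (hilb I t) = d * int t + 1 - g"
    and dim1: "d > 0"
    and hvec: "hilb_series I * (1 - fps_X)\<^sup>2 = fps_of_poly h"
    and hpos: "\<forall>i\<le>Polynomial.degree h. Polynomial.coeff h i > 0"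
  shows "g \<ge> 0"
proof -
  define A where "A = hilb_series I"
  define a where "a n = int (hilb I n)" for n
  have Aa: "A $ n = a n" for n by (simp add: A_def a_def hilb_series_def)
  define B where "B = A * (1 - fps_X)"
  have Bn: "B $ n = a n - (if n = 0 then 0 else a (n - 1))" for n
    by (simp add: B_def algebra_simps Aa)
  have BX: "B * (1 - fps_X) = fps_of_poly h"
    using hvec by (simp add: B_def A_def power2_eq_square mult.assoc)
  have Bh: "B $ n - (if n = 0 then 0 else B $ (n - 1)) = Polynomial.coeff h n" for n
  proof -
    have "(B * (1 - fps_X)) $ n = B $ n - (if n = 0 then 0 else B $ (n - 1))"
      by (simp add: algebra_simps)
    thus ?thesis using BX by simp
  qed
  have Bsum: "B $ n = (\<Sum>i\<le>n. Polynomial.coeff h i)" for n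
  proof (induction n)
    case 0 then show ?case using Bh[of 0] by simp
  next
    case (Suc n) then show ?case using Bh[of "Suc n"] by simp
  qed
  have asum: "a n = (\<Sum>j\<le>n. B $ j)" for n
  proof (induction n)
    case 0 then show ?case using Bn[of 0] by simp
  next
    case (Suc n) then show ?case using Bn[of "Suc n"] by simp
  qed
  have hnn: "Polynomial.coeff h i \<ge> 0" for i
    using hpos by (cases "i \<le> Polynomial.degree h") (auto simp: coeff_eq_0 less_imp_le)
  have Bmono: "B $ n \<le> B $ m" if "n \<le> m" for n m
  proof -
    have "(\<Sum>i\<le>n. Polynomial.coeff h i) \<le> (\<Sum>i\<le>m. Polynomial.coeff h i)"
      using that by (intro sum_mono2) (auto simp: hnn)
    thus ?thesis by (simp add: Bsum)
  qed
  obtain N where N: "\<And>t. t \<ge> N \<Longrightarrow> a t = d * int t + 1 - g"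
    using hilb_poly unfolding eventually_sequentially a_def by blast
  have Bd: "B $ n = d" if "n \<ge> N + 1" for n
  proof -
    have "a n = d * int n + 1 - g" "a (n - 1) = d * int (n - 1) + 1 - g"
      using N that by auto
    moreover have "int (n - 1) = int n - 1" using that by simp
    ultimately show ?thesis using Bn[of n] that by (simp add: algebra_simps)
  qed
  have Ble: "B $ j \<le> d" for j
    using Bmono[of j "max j (N + 1)"] Bd[of "max j (N+1)"] by simp
  define t where "t = N + 1"
  have "a t = B $ 0 + (\<Sum>j\<in>{1..t}. B $ j)"
    unfolding asum by (simp add: atMost_atLeast0 sum.atLeast_Suc_atMost)
  also have "(\<Sum>j\<in>{1..t}. B $ j) \<le> (\<Sum>j\<in>{1..t}. d)" by (intro sum_mono Ble)
  also have "(\<Sum>j\<in>{1..t}. d) = d * int t" by simp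
  finally have "a t \<le> B $ 0 + d * int t" by simp
  moreover have "a t = d * int t + 1 - g" using N t_def by simp
  moreover have "B $ 0 = a 0" using Bn[of 0] by simp
  moreover have "a 0 \<le> 1"
  proof -
    have "hilb I 0 \<le> vector_space.dim kscale (hom_piece 0 :: ('v, 'a) mpoly set)"
      unfolding hilb_def by simp
    thus ?thesis using hom_piece0_dim[where 'v='v and 'a='a] by (simp add: a_def)
  qed
  ultimately show ?thesis by simp
qed

end
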